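(* Let $V_{\natural}$ be a finite set of boolean and integer variables, $\varphi=\{\varphi_1,\dots,\varphi_n\}$ a set of predicates over integer variables of $V_{\natural}$, and $\alpha^{\tau}$ and $\gamma$ as in the context. For every concrete transition relation $r^{\natural}$ and every set of abstract states $s^{\sharp}$, $$post[r^{\natural}](\gamma(s^{\sharp}))\subseteq\gamma\big(post[\alpha^{\tau}(r^{\natural})](s^{\sharp})\big).$$
   Context: Sets of concrete states are formulas over $V_{\natural}$, concrete transitions are formulas over $V_{\natural}\cup V_{\natural}'$ (primes denote next-state values). For a transition relation $R$ and set of states $A$, $post[R](A)=\{y\mid x\in A,\ (x,y)\in R\}$. $V(\varphi)$ is the set of variables in $\varphi$; $\varphi_i'$ is the primed version of $\varphi_i$. Fresh booleans $b_i,b_i'$ stand for $\varphi_i,\varphi_i'$; abstract variables $V_{\sharp}=(V_{\natural}\cup\{b_i\})\setminus V(\varphi)$. Concretization of abstract states: $\gamma(s^{\sharp})=s^{\sharp}[\bar\varphi/\bar b]$. With $CS=\bigwedge_{i}\big((\bigwedge_{v\in V(\varphi_i)}v'=v)\implies(b_i'\iff b_i)\big)$, transition abstraction is $\alpha^{\tau}(r^{\natural})=\exists V(\varphi).\exists V(\varphi').\big(r^{\natural}\wedge CS\wedge\bigwedge_i(\varphi_i\iff b_i)\wedge\bigwedge_i(\varphi_i'\iff b_i')\big)$, a formula over $V_{\sharp}\cup V_{\sharp}'$. *)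

theory Defs
  imports Main
begin

datatype val = BV bool | IV int
datatype vtype = TBool | TInt

fun has_type :: "val \<Rightarrow> vtype \<Rightarrow> bool" where
  "has_type (BV _) t \<longleftrightarrow> t = TBool"
| "has_type (IV _) t \<longleftrightarrow> t = TInt"

text \<open>Valuations of a variable set X (typed by T): partial maps with domain exactly X.
  A formula over X is identified with the set of valuations of X satisfying it.\<close>
definition states :: "('x \<Rightarrow> vtype) \<Rightarrow> 'x set \<Rightarrow> ('x \<rightharpoonup> val) set" where
  "states T X = {s. dom s = X \<and> (\<forall>x\<in>X. \<forall>u. s x = Some u \<longrightarrow> has_type u (T x))}"

definition post :: "('s \<times> 's) set \<Rightarrow> 's set \<Rightarrow> 's set" where
  "post R A = {y. \<exists>x\<in>A. (x, y) \<in> R}"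

text \<open>Predicates phi 0 .. phi (n-1); Vp i is the variable set V(phi_i);
  V(phi) is their union.\<close>
definition Vphi :: "nat \<Rightarrow> (nat \<Rightarrow> 'v set) \<Rightarrow> 'v set" where
  "Vphi n Vp = (\<Union>i<n. Vp i)"

text \<open>Abstract variables: (V \<union> {b_i}) - V(phi); b_i is Inr i.\<close>
definition absVars :: "'v set \<Rightarrow> nat \<Rightarrow> (nat \<Rightarrow> 'v set) \<Rightarrow> ('v + nat) set" where
  "absVars V n Vp = Inl ` (V - Vphi n Vp) \<union> Inr ` {..<n}"

definition absTy :: "('v \<Rightarrow> vtype) \<Rightarrow> ('v + nat) \<Rightarrow> vtype" where
  "absTy T = case_sum T (\<lambda>_. TBool)"

definition abs_of :: "'v set \<Rightarrow> nat \<Rightarrow> (nat \<Rightarrow> 'v set) \<Rightarrow> (nat \<Rightarrow> ('v \<rightharpoonup> val) \<Rightarrow> bool)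
    \<Rightarrow> ('v \<rightharpoonup> val) \<Rightarrow> ('v + nat) \<rightharpoonup> val" where
  "abs_of V n Vp phi x = (\<lambda>z. case z of
      Inl v \<Rightarrow> (if v \<in> V - Vphi n Vp then x v else None)
    | Inr i \<Rightarrow> (if i < n then Some (BV (phi i x)) else None))"

text \<open>gamma(s#) = s#[phi/b]: a concrete state satisfies it iff s# holds when every b_i
  is replaced by the value of phi_i.\<close>
definition gamma :: "'v set \<Rightarrow> ('v \<Rightarrow> vtype) \<Rightarrow> nat \<Rightarrow> (nat \<Rightarrow> 'v set)
    \<Rightarrow> (nat \<Rightarrow> ('v \<rightharpoonup> val) \<Rightarrow> bool) \<Rightarrow> (('v + nat) \<rightharpoonup> val) set \<Rightarrow> ('v \<rightharpoonup> val) set" where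
  "gamma V T n Vp phi sA = {x \<in> states T V. abs_of V n Vp phi x \<in> sA}"

text \<open>alpha_tau(r) = EX V(phi). EX V(phi'). (r \<and> CS \<and> /\ (phi_i <-> b_i) \<and> /\ (phi_i' <-> b_i')).
  The existentially quantified concrete pair (x,x') agrees with (a,a') on the
  non-eliminated concrete variables V - V(phi).\<close>
definition alpha_tau :: "'v set \<Rightarrow> ('v \<Rightarrow> vtype) \<Rightarrow> nat \<Rightarrow> (nat \<Rightarrow> 'v set)
    \<Rightarrow> (nat \<Rightarrow> ('v \<rightharpoonup> val) \<Rightarrow> bool) \<Rightarrow> (('v \<rightharpoonup> val) \<times> ('v \<rightharpoonup> val)) set
    \<Rightarrow> ((('v + nat) \<rightharpoonup> val) \<times> (('v + nat) \<rightharpoonup> val)) set" where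
  "alpha_tau V T n Vp phi r =
     {(a, a'). a \<in> states (absTy T) (absVars V n Vp) \<and> a' \<in> states (absTy T) (absVars V n Vp) \<and>
        (\<exists>x x'. x \<in> states T V \<and> x' \<in> states T V \<and>
           (\<forall>v\<in>V - Vphi n Vp. x v = a (Inl v) \<and> x' v = a' (Inl v)) \<and>
           (x, x') \<in> r \<and>
           (\<forall>i<n. (\<forall>v\<in>Vp i. x' v = x v) \<longrightarrow> (a' (Inr i) = a (Inr i))) \<and>
           (\<forall>i<n. a (Inr i) = Some (BV (phi i x))) \<and>
           (\<forall>i<n. a' (Inr i) = Some (BV (phi i x'))))}"

end

theory Submission
  imports Defs
begin
lemma abs_of_states:
  assumes "y \<in> states T V"
  shows "abs_of V n Vp phi y \<in> states (absTy T) (absVars V n Vp)"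
proof -
  have dy: "dom y = V" and ty: "\<And>x u. x \<in> V \<Longrightarrow> y x = Some u \<Longrightarrow> has_type u (T x)"
    using assms unfolding states_def by auto
  have d: "dom (abs_of V n Vp phi y) = absVars V n Vp"
  proof (rule set_eqI)
    fix z show "z \<in> dom (abs_of V n Vp phi y) \<longleftrightarrow> z \<in> absVars V n Vp"
    proof (cases z)
      case (Inl v) then show ?thesis using dy unfolding abs_of_def absVars_def by (auto simp: dom_def)
    next
      case (Inr i) then show ?thesis unfolding abs_of_def absVars_def by (auto simp: dom_def)
    qed
  qed
  show ?thesis unfolding states_def
  proof (intro CollectI conjI d ballI allI impI)
    fix z u assume z: "z \<in> absVars V n Vp" and u: "abs_of V n Vp phi y z = Some u"
    show "has_type u (absTy T z)"
    proof (cases z)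
      case (Inl v) thus ?thesis using u ty unfolding abs_of_def absTy_def
        by (auto split: if_splits)
    next
      case (Inr i) thus ?thesis using u unfolding abs_of_def absTy_def
        by (auto split: if_splits)
    qed
  qed
qed

theorem lemma5:
  fixes V :: "'v set" and T :: "'v \<Rightarrow> vtype" and n :: nat
    and Vp :: "nat \<Rightarrow> 'v set" and phi :: "nat \<Rightarrow> ('v \<rightharpoonup> val) \<Rightarrow> bool"
    and r :: "(('v \<rightharpoonup> val) \<times> ('v \<rightharpoonup> val)) set"
    and sA :: "(('v + nat) \<rightharpoonup> val) set"
  assumes "finite V"
    and "\<And>i. i < n \<Longrightarrow> Vp i \<subseteq> {v \<in> V. T v = TInt}"
    and "\<And>i x y. i < n \<Longrightarrow> x \<in> states T V \<Longrightarrow> y \<in> states T V \<Longrightarrow>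
           (\<forall>v\<in>Vp i. x v = y v) \<Longrightarrow> phi i x = phi i y"
    and "r \<subseteq> states T V \<times> states T V"
    and "sA \<subseteq> states (absTy T) (absVars V n Vp)"
  shows "post r (gamma V T n Vp phi sA)
           \<subseteq> gamma V T n Vp phi (post (alpha_tau V T n Vp phi r) sA)"
proof
  fix y assume "y \<in> post r (gamma V T n Vp phi sA)"
  then obtain x where x: "x \<in> gamma V T n Vp phi sA" and xy: "(x, y) \<in> r"
    unfolding post_def by blast
  have xs: "x \<in> states T V" and ys: "y \<in> states T V" using xy assms(4) by auto
  have xa: "abs_of V n Vp phi x \<in> sA" using x unfolding gamma_def by blast
  define a where "a = abs_of V n Vp phi x"
  define a' where "a' = abs_of V n Vp phi y"
  have as: "a \<in> states (absTy T) (absVars V n Vp)" unfolding a_def by (rule abs_of_states[OF xs])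
  have as': "a' \<in> states (absTy T) (absVars V n Vp)" unfolding a'_def by (rule abs_of_states[OF ys])
  have c1: "\<forall>v\<in>V - Vphi n Vp. x v = a (Inl v) \<and> y v = a' (Inl v)"
    unfolding a_def a'_def abs_of_def by simp
  have c2: "\<forall>i<n. (\<forall>v\<in>Vp i. y v = x v) \<longrightarrow> a' (Inr i) = a (Inr i)"
  proof (intro allI impI)
    fix i assume i: "i < n" and e: "\<forall>v\<in>Vp i. y v = x v"
    have "phi i x = phi i y" using assms(3)[OF i xs ys] e by simp
    then show "a' (Inr i) = a (Inr i)" unfolding a_def a'_def abs_of_def using i by simp
  qed
  have c3: "\<forall>i<n. a (Inr i) = Some (BV (phi i x))" unfolding a_def abs_of_def by simp
  have c4: "\<forall>i<n. a' (Inr i) = Some (BV (phi i y))" unfolding a'_def abs_of_def by simp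
  have "(a, a') \<in> alpha_tau V T n Vp phi r"
    unfolding alpha_tau_def mem_Collect_eq case_prod_conv
    using as as' xs ys c1 xy c2 c3 c4 by blast
  then have "a' \<in> post (alpha_tau V T n Vp phi r) sA"
    using xa unfolding post_def a_def by blast
  then show "y \<in> gamma V T n Vp phi (post (alpha_tau V T n Vp phi r) sA)"
    using ys unfolding gamma_def a'_def by blast
qed
end
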